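(* For every $r\ge1$, $$F^r_{\rm Sem}=F_{\rm lin}\Big(\sum_{\mathbf{n}\in A(F)^*}\big(\underbrace{\mathrm{sem}^\bullet\circ\cdots\circ\mathrm{sem}^\bullet}_{r\text{ times}}\big)^{\mathbf{n}}B_{\mathbf{n}}\Big),$$ i.e. one may take ${}_r\mathrm{sem}^\bullet=\mathrm{sem}^\bullet\circ\cdots\circ\mathrm{sem}^\bullet$ ($r$ times).
   Context: Fix $\nu\ge1$, $\lambda\in\mathbb{C}^\nu$, $\lambda\cdot m=\sum_i\lambda_im_i$. Let $f(x)=(e^{\lambda_1}x_1,\dots,e^{\lambda_\nu}x_\nu)+h(x)$ be a local analytic diffeomorphism of $(\mathbb{C}^\nu,0)$, $F(\varphi)=\varphi\circ f$ on $\mathbb{C}[[x]]$, $F_{\rm lin}(x^m)=e^{\lambda\cdot m}x^m$. An operator is homogeneous of degree $n\in\mathbb{Z}^\nu$ if it maps each $x^m$ to a multiple of $x^{m+n}$. Write $F=F_{\rm lin}(\mathrm{Id}+\sum_{n\in A(F)}B_n)$, $B_n$ homogeneous of degree $n$, where $A(F)\subset\mathbb{Z}^\nu$ is taken closed under addition (degrees with zero operator allowed). Words $\mathbf{n}=n_1\cdots n_r$ on $A(F)$ (possibly empty), $B_{\mathbf{n}}=B_{n_1}\circ\cdots\circ B_{n_r}$, $B_\emptyset=\mathrm{Id}$, $\|\mathbf{n}\|=n_1+\dots+n_r$. Moulds are maps from words to $\mathbb{C}$; product $(M\cdot N)^{\mathbf{a}}=\sum_{\mathbf{a}^1\mathbf{a}^2=\mathbf{a}}M^{\mathbf{a}^1}N^{\mathbf{a}^2}$;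 $1^\bullet$ ($1$ on $\emptyset$, else $0$); $I^\bullet$ ($1$ on length-one words, else $0$); $\mathrm{Exp}\,M=\sum_{k\ge0}M^{\cdot k}/k!$ for $M^\emptyset=0$; $e^\Delta(M)^{\mathbf{n}}=e^{-\lambda\cdot\|\mathbf{n}\|}M^{\mathbf{n}}$. Composition: $M\circ N$ is the mould with generating series $\sum_{\mathbf{b}}M^{\mathbf{b}}\Phi_N^{b_1}\cdots\Phi_N^{b_r}$ where $\Phi_N^{c}=\sum_{\mathbf{a}\neq\emptyset,\|\mathbf{a}\|=c}N^{\mathbf{a}}\mathbf{a}$ (the $\mathbf{b}=\emptyset$ term being $M^\emptyset$). Universal moulds: $\mathrm{Log}\,I^\bullet$ is the mould with $\sum(\mathrm{Log}I)^{\mathbf{a}}\mathbf{a}=\log(1+\sum_{a}a)$ ($\log(1+y)=\sum_{k\ge1}(-1)^{k+1}y^k/k$), i.e. $(\mathrm{Log}I)^{\mathbf{a}}=(-1)^{l+1}/l$ for words of length $l\ge1$ and $0$ on $\emptyset$; $\mathrm{dem}^{\mathbf{n}}=(\mathrm{Log}I)^{\mathbf{n}}/(1-e^{\lambda\cdot\|\mathbf{n}\|})$ if $\mathbf{n}\neq\emptyset$ and $e^{\lambda\cdot\|\mathbf{n}\|}\neq1$, and $0$ otherwise; $\mathrm{sem}^\bullet=e^\Delta(\mathrm{Exp}\,\mathrm{dem}^\bullet)\cdot(1^\bullet+I^\bullet)\cdot\mathrm{Exp}(-\mathrm{dem}^\bullet)$. Trimmed form up to order $r$: $F^0_{\rm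 Sem}=F$; given $F^{i-1}_{\rm Sem}=F_{\rm lin}(\mathrm{Id}+\sum_n{}_iB_n)=F_{\rm lin}\exp(\sum_m{}_iD_m)$ with ${}_iB_n$ homogeneous of degree $n$ and ${}_iD_m$ homogeneous derivations of degree $m$, let $\mathbf{V}_i=\sum_{m:\,e^{\lambda\cdot m}\neq1}{}_iD_m/(1-e^{\lambda\cdot m})$ and $F^i_{\rm Sem}=\exp(\mathbf{V}_i)F^{i-1}_{\rm Sem}\exp(-\mathbf{V}_i)$. *)

theory Defs
  imports "HOL-Analysis.Analysis" "HOL-Library.Function_Algebras"
begin

(* Index type 'v (finite, nonempty) plays the role of {1..nu}.
   Exponents of monomials x^m : 'v => nat ; degrees n in Z^nu : 'v => int. *)
type_synonym 'v mon = "'v \<Rightarrow> nat"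
type_synonym 'v ser = "'v mon \<Rightarrow> complex"
type_synonym 'v deg = "'v \<Rightarrow> int"
(* a linear operator T on C[[x]] given by its matrix: T k m = coefficient of x^k in T(x^m) *)
type_synonym 'v op = "'v mon \<Rightarrow> 'v mon \<Rightarrow> complex"
type_synonym 'v mould = "'v deg list \<Rightarrow> complex"

definition tdeg :: "'v::finite mon \<Rightarrow> nat" where
  "tdeg m = (\<Sum>i\<in>UNIV. m i)"

definition mdeg :: "'v mon \<Rightarrow> 'v deg" where
  "mdeg m = (\<lambda>i. int (m i))"

definition unitv :: "'v \<Rightarrow> 'v mon" where
  "unitv j = (\<lambda>i. if i = j then 1 else 0)"

definition ldot :: "('v::finite \<Rightarrow> complex) \<Rightarrow> 'v deg \<Rightarrow> complex" where
  "ldot lam n = (\<Sum>i\<in>UNIV. lam i * of_int (n i))"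

definition ser_one :: "'v ser" where
  "ser_one k = (if k = (\<lambda>_. 0) then 1 else 0)"

definition ser_mult :: "'v ser \<Rightarrow> 'v ser \<Rightarrow> 'v ser" where
  "ser_mult p q k = (\<Sum>j\<in>{j. \<forall>i. j i \<le> k i}. p j * q (\<lambda>i. k i - j i))"

definition ser_pow :: "'v ser \<Rightarrow> nat \<Rightarrow> 'v ser" where
  "ser_pow p n = ((ser_mult p) ^^ n) ser_one"

definition enum_v :: "'v::finite list" where
  "enum_v = (SOME xs. distinct xs \<and> set xs = UNIV)"

(* F(phi) = phi o f : matrix entry (k,m) = coefficient of x^k in prod_i f_i^(m_i) *)
definition comp_op :: "('v::finite \<Rightarrow> 'v ser) \<Rightarrow> 'v op" where
  "comp_op f k m =
     foldr (\<lambda>i acc. ser_mult (ser_pow (f i) (m i)) acc) enum_v ser_one k"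

definition op_id :: "'v op" where
  "op_id k m = (if k = m then 1 else 0)"

definition op_zero :: "'v op" where
  "op_zero k m = 0"

definition op_lin :: "('v::finite \<Rightarrow> complex) \<Rightarrow> 'v op" where
  "op_lin lam k m = (if k = m then exp (ldot lam (mdeg m)) else 0)"

(* composition S o T (for operators not decreasing total degree; only such occur) *)
definition op_comp :: "'v::finite op \<Rightarrow> 'v op \<Rightarrow> 'v op" where
  "op_comp S T k m = (\<Sum>j\<in>{j. tdeg j \<le> tdeg k}. S k j * T j m)"

definition op_minus :: "'v op \<Rightarrow> 'v op \<Rightarrow> 'v op" where
  "op_minus S T k m = S k m - T k m"

definition op_uminus :: "'v op \<Rightarrow> 'v op" where
  "op_uminus S k m = - S k m"

definition op_scale :: "complex \<Rightarrow> 'v op \<Rightarrow> 'v op" where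
  "op_scale c S k m = c * S k m"

definition op_pow :: "'v::finite op \<Rightarrow> nat \<Rightarrow> 'v op" where
  "op_pow T n = ((op_comp T) ^^ n) op_id"

(* exp(N) = sum_j N^j/j!  (N strictly raises total degree, so the series is
   finite on each entry: terms with j > tdeg k vanish) *)
definition op_exp :: "'v::finite op \<Rightarrow> 'v op" where
  "op_exp N k m = (\<Sum>j\<le>tdeg k. op_pow N j k m / of_nat (fact j))"

(* log(Id + N) = sum_{j>=1} (-1)^(j+1) N^j / j  (same finiteness remark) *)
definition op_log1p :: "'v::finite op \<Rightarrow> 'v op" where
  "op_log1p N k m = (\<Sum>j\<in>{1..tdeg k}. (-1) ^ (j + 1) * op_pow N j k m / of_nat j)"

definition hom_part :: "'v op \<Rightarrow> 'v deg \<Rightarrow> 'v op" where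
  "hom_part T n k m = (if mdeg k = mdeg m + n then T k m else 0)"

definition hsum :: "('v deg \<Rightarrow> 'v op) \<Rightarrow> 'v op" where
  "hsum Tf k m = Tf (mdeg k - mdeg m) k m"

(* B_n : F = F_lin (Id + sum_n B_n) *)
definition opB :: "('v::finite \<Rightarrow> complex) \<Rightarrow> ('v \<Rightarrow> 'v ser) \<Rightarrow> 'v deg \<Rightarrow> 'v op" where
  "opB lam f n = hom_part (op_minus (op_comp (op_lin (- lam)) (comp_op f)) op_id) n"

definition opBw :: "('v::finite \<Rightarrow> complex) \<Rightarrow> ('v \<Rightarrow> 'v ser) \<Rightarrow> 'v deg list \<Rightarrow> 'v op" where
  "opBw lam f w = foldr (\<lambda>n acc. op_comp (opB lam f n) acc) w op_id"

definition sem_step :: "('v::finite \<Rightarrow> complex) \<Rightarrow> 'v op \<Rightarrow> 'v op" where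
  "sem_step lam G =
     (let D = op_log1p (op_minus (op_comp (op_lin (- lam)) G) op_id);
          V = hsum (\<lambda>n. if exp (ldot lam n) \<noteq> 1
                         then op_scale (1 / (1 - exp (ldot lam n))) (hom_part D n)
                         else op_zero)
      in op_comp (op_exp V) (op_comp G (op_exp (op_uminus V))))"

definition Fsem :: "('v::finite \<Rightarrow> complex) \<Rightarrow> ('v \<Rightarrow> 'v ser) \<Rightarrow> nat \<Rightarrow> 'v op" where
  "Fsem lam f i = ((sem_step lam) ^^ i) (comp_op f)"

definition mprod :: "'v mould \<Rightarrow> 'v mould \<Rightarrow> 'v mould" where
  "mprod M N a = (\<Sum>i\<le>length a. M (take i a) * N (drop i a))"

definition mone :: "'v mould" where
  "mone a = (if a = [] then 1 else 0)"

definition mI :: "'v mould" where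
  "mI a = (if length a = 1 then 1 else 0)"

definition mpow :: "'v mould \<Rightarrow> nat \<Rightarrow> 'v mould" where
  "mpow M k = ((mprod M) ^^ k) mone"

(* Exp M = sum_k M^{.k}/k!  (for M^[] = 0 only k <= length a contribute) *)
definition mExp :: "'v mould \<Rightarrow> 'v mould" where
  "mExp M a = (\<Sum>k\<le>length a. mpow M k a / of_nat (fact k))"

definition eDelta :: "('v::finite \<Rightarrow> complex) \<Rightarrow> 'v mould \<Rightarrow> 'v mould" where
  "eDelta lam M a = exp (- ldot lam (sum_list a)) * M a"

definition mLogI :: "'v mould" where
  "mLogI a = (if a = [] then 0 else (-1) ^ (length a + 1) / of_nat (length a))"

definition dem :: "('v::finite \<Rightarrow> complex) \<Rightarrow> 'v mould" where
  "dem lam a = (if a \<noteq> [] \<and> exp (ldot lam (sum_list a)) \<noteq> 1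
                then mLogI a / (1 - exp (ldot lam (sum_list a))) else 0)"

definition sem :: "('v::finite \<Rightarrow> complex) \<Rightarrow> 'v mould" where
  "sem lam = mprod (mprod (eDelta lam (mExp (dem lam))) (\<lambda>a. mone a + mI a))
                   (mExp (\<lambda>a. - dem lam a))"

definition mcomp :: "'v mould \<Rightarrow> 'v mould \<Rightarrow> 'v mould" where
  "mcomp M N a = (if a = [] then M [] else 0) +
     (\<Sum>ps\<in>{ps. concat ps = a \<and> ps \<noteq> [] \<and> (\<forall>p\<in>set ps. p \<noteq> [])}.
        M (map sum_list ps) * prod_list (map N ps))"

definition semr :: "('v::finite \<Rightarrow> complex) \<Rightarrow> nat \<Rightarrow> 'v mould" where
  "semr lam r = ((mcomp (sem lam)) ^^ (r - 1)) (sem lam)"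

definition word_sum :: "('v::finite \<Rightarrow> complex) \<Rightarrow> ('v \<Rightarrow> 'v ser) \<Rightarrow> 'v deg set \<Rightarrow> 'v mould \<Rightarrow> 'v op" where
  "word_sum lam f A M k m = infsum (\<lambda>w. M w * opBw lam f w k m) (lists A)"

end

theory Submission
  imports Defs
begin


lemma le_tdeg: "j i \<le> tdeg (j::'v::finite mon)"
  unfolding tdeg_def by (rule member_le_sum) auto

lemma finite_bounded: "finite {j::'v::finite mon. \<forall>i. j i \<le> d}"
proof -
  have "{j::'v mon. \<forall>i. j i \<le> d} = PiE UNIV (\<lambda>_. {..d})"
    by (auto simp: PiE_UNIV_domain)
  thus ?thesis by (simp add: finite_PiE)
qed

lemma finite_J: "finite {j::'v::finite mon. tdeg j \<le> d}"
  by (rule finite_subset[OF _ finite_bounded[of d]]) (auto intro: order_trans[OF le_tdeg])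

definition lower :: "'v::finite op \<Rightarrow> bool" where
  "lower T \<longleftrightarrow> (\<forall>k j. tdeg k < tdeg j \<longrightarrow> T k j = 0)"

lemma op_comp_assoc:
  assumes "lower T"
  shows "op_comp (op_comp S T) U = op_comp S (op_comp T U)"
proof (intro ext)
  fix k m
  let ?J = "\<lambda>k. {j::'a mon. tdeg j \<le> tdeg k}"
  have "op_comp S (op_comp T U) k m = (\<Sum>j\<in>?J k. S k j * op_comp T U j m)"
    by (simp add: op_comp_def)
  also have "\<dots> = (\<Sum>j\<in>?J k. S k j * (\<Sum>l\<in>?J k. T j l * U l m))"
  proof (rule sum.cong[OF refl])
    fix j assume j: "j \<in> ?J k"
    have "(\<Sum>l\<in>?J j. T j l * U l m) = (\<Sum>l\<in>?J k. T j l * U l m)"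
      apply (rule sum.mono_neutral_left[OF finite_J])
      using j assms by (auto simp: lower_def)
    thus "S k j * op_comp T U j m = S k j * (\<Sum>l\<in>?J k. T j l * U l m)"
      by (simp add: op_comp_def)
  qed
  also have "\<dots> = (\<Sum>j\<in>?J k. \<Sum>l\<in>?J k. S k j * T j l * U l m)"
    by (simp add: sum_distrib_left mult.assoc)
  also have "\<dots> = (\<Sum>l\<in>?J k. \<Sum>j\<in>?J k. S k j * T j l * U l m)"
    by (rule sum.swap)
  also have "\<dots> = op_comp (op_comp S T) U k m"
    by (simp add: op_comp_def sum_distrib_right)
  finally show "op_comp (op_comp S T) U k m = op_comp S (op_comp T U) k m" by simp
qed

lemma lower_comp: "lower T \<Longrightarrow> lower (op_comp S T)"
  unfolding lower_def op_comp_def by (auto intro!: sum.neutral)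

lemma lower_lin: "lower (op_lin c)"
  unfolding lower_def op_lin_def by auto

lemma lower_id: "lower op_id"
  unfolding lower_def op_id_def by auto

lemma sum_if_left: "finite S \<Longrightarrow> k \<in> S \<Longrightarrow> (\<Sum>j\<in>S. (if k = j then a j else 0) * b j) = a k * (b k::complex)"
proof -
  assume "finite S" "k \<in> S"
  have "(\<Sum>j\<in>S. (if k = j then a j else 0) * b j) = (\<Sum>j\<in>S. if k = j then a j * b j else 0)"
    by (rule sum.cong) auto
  thus ?thesis using \<open>finite S\<close> \<open>k \<in> S\<close> by (simp add: sum.delta)
qed

lemma sum_if_right: "finite S \<Longrightarrow> m \<in> S \<Longrightarrow> (\<Sum>j\<in>S. b j * (if j = m then a j else 0)) = b m * (a m::complex)"
proof -
  assume "finite S" "m \<in> S"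
  have "(\<Sum>j\<in>S. b j * (if j = m then a j else 0)) = (\<Sum>j\<in>S. if m = j then b j * a j else 0)"
    by (rule sum.cong) auto
  thus ?thesis using \<open>finite S\<close> \<open>m \<in> S\<close> by (simp add: sum.delta)
qed

lemma comp_id_left: "op_comp op_id X = X"
  unfolding op_comp_def op_id_def by (intro ext) (simp add: finite_J sum_if_left[where a="\<lambda>_. 1", simplified])

lemma comp_id_right: "lower X \<Longrightarrow> op_comp X op_id = X"
  unfolding op_comp_def op_id_def lower_def
  apply (intro ext)
  subgoal for k m
    by (cases "tdeg m \<le> tdeg k") (auto simp: finite_J sum_if_right[where a="\<lambda>_. 1", simplified] intro!: sum.neutral)
  done

lemma comp_lin_left: "op_comp (op_lin c) X k m = exp (ldot c (mdeg k)) * X k m"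
  unfolding op_comp_def op_lin_def by (simp add: finite_J sum_if_left)

lemma comp_lin_right: "lower X \<Longrightarrow> op_comp X (op_lin c) k m = X k m * exp (ldot c (mdeg m))"
  unfolding op_comp_def op_lin_def lower_def
  by (cases "tdeg m \<le> tdeg k") (auto simp: finite_J sum_if_right intro!: sum.neutral)

lemma ldot_add: "ldot lam (a + b) = ldot lam a + ldot lam b"
  unfolding ldot_def by (simp add: distrib_left sum.distrib)

lemma ldot_uminus: "ldot (- lam) a = - ldot lam a"
  unfolding ldot_def by (simp add: sum_negf)



fun bw :: "('v::finite deg \<Rightarrow> 'v op) \<Rightarrow> 'v deg list \<Rightarrow> 'v op" where
  "bw B [] = op_id"
| "bw B (n # w) = op_comp (B n) (bw B w)"

definition good :: "('v::finite deg \<Rightarrow> 'v op) \<Rightarrow> bool" where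
  "good B \<longleftrightarrow> (\<forall>n k m. B n k m \<noteq> 0 \<longrightarrow> mdeg k = mdeg m + n \<and> tdeg m < tdeg k)"

definition Dset :: "'v::finite mon \<Rightarrow> 'v deg set" where
  "Dset k = (\<lambda>(a, b). mdeg a - mdeg b) ` ({j. tdeg j \<le> tdeg k} \<times> {j. tdeg j \<le> tdeg k})"

definition Wd :: "'v::finite mon \<Rightarrow> 'v deg list set" where
  "Wd k = {w. set w \<subseteq> Dset k \<and> length w \<le> tdeg k}"

lemma finite_Dset: "finite (Dset k)"
  unfolding Dset_def by (intro finite_imageI finite_cartesian_product finite_J)

lemma finite_Wd: "finite (Wd k)"
  unfolding Wd_def by (rule finite_lists_length_le[OF finite_Dset])

lemma Dset_mono: "tdeg j \<le> tdeg k \<Longrightarrow> Dset j \<subseteq> Dset k"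
  unfolding Dset_def by auto

lemma Wd_mono: "tdeg j \<le> tdeg k \<Longrightarrow> Wd j \<subseteq> Wd k"
  unfolding Wd_def using Dset_mono by fastforce

lemma in_Dset: "tdeg a \<le> tdeg k \<Longrightarrow> tdeg b \<le> tdeg k \<Longrightarrow> mdeg a - mdeg b \<in> Dset k"
  unfolding Dset_def by force

lemma sum_nz: "sum g S \<noteq> 0 \<Longrightarrow> \<exists>x\<in>S. g x \<noteq> 0"
proof (rule ccontr)
  assume a: "sum g S \<noteq> 0" and b: "\<not> (\<exists>x\<in>S. g x \<noteq> 0)"
  from b have "\<forall>x\<in>S. g x = 0" by simp
  hence "sum g S = 0" by (rule sum.neutral)
  with a show False by simp
qed

lemma op_comp_nz: "op_comp S T k m \<noteq> 0 \<Longrightarrow> \<exists>j. tdeg j \<le> tdeg k \<and> S k j \<noteq> 0 \<and> T j m \<noteq> 0"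
  unfolding op_comp_def using sum_nz by fastforce

lemma good_lower: "good B \<Longrightarrow> lower (B n)"
  unfolding good_def lower_def using less_asym by blast

lemma good_hom: "good B \<Longrightarrow> B n k m \<noteq> 0 \<Longrightarrow> mdeg k = mdeg m + n \<and> tdeg m < tdeg k"
  unfolding good_def by blast

lemma bw_nz:
  assumes "good B"
  shows "bw B w k m \<noteq> 0 \<Longrightarrow> tdeg m + length w \<le> tdeg k \<and> mdeg k = mdeg m + sum_list w \<and> set w \<subseteq> Dset k"
proof (induction w arbitrary: k)
  case Nil
  thus ?case by (auto simp: op_id_def split: if_splits)
next
  case (Cons n w)
  from op_comp_nz[OF Cons.prems[simplified]] obtain j where
    j: "tdeg j \<le> tdeg k" "B n k j \<noteq> 0" "bw B w j m \<noteq> 0" by blast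
  from good_hom[OF assms j(2)] have h: "mdeg k = mdeg j + n" "tdeg j < tdeg k" by auto
  from Cons.IH[OF j(3)] have ih: "tdeg m + length w \<le> tdeg j" "mdeg j = mdeg m + sum_list w" "set w \<subseteq> Dset j" by auto
  have "n = mdeg k - mdeg j" using h by simp
  hence "n \<in> Dset k" using in_Dset[OF order.refl j(1)] by simp
  moreover have "set w \<subseteq> Dset k" using ih(3) Dset_mono[OF j(1)] by blast
  moreover have "mdeg k = mdeg m + sum_list (n # w)" using h ih by (simp add: algebra_simps)
  moreover have "tdeg m + length (n # w) \<le> tdeg k" using h ih by simp
  ultimately show ?case by simp
qed

lemma lower_bw: "good B \<Longrightarrow> lower (bw B w)"
  unfolding lower_def using bw_nz by (metis add_leD1 leD)

lemma bw_append: "good B \<Longrightarrow> bw B (u @ v) = op_comp (bw B u) (bw B v)"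
proof (induction u)
  case Nil thus ?case by (simp add: comp_id_left)
next
  case (Cons n u)
  thus ?case by (simp add: op_comp_assoc[OF lower_bw[OF Cons.prems]])
qed

lemma supp_Wd: "good B \<Longrightarrow> {w. bw B w k m \<noteq> 0} \<subseteq> Wd k"
  unfolding Wd_def using bw_nz by (smt (verit) add_leD2 mem_Collect_eq subsetI)

definition Opg :: "('v::finite deg \<Rightarrow> 'v op) \<Rightarrow> 'v mould \<Rightarrow> 'v op" where
  "Opg B M k m = (\<Sum>w\<in>{w. bw B w k m \<noteq> 0}. M w * bw B w k m)"

lemma Opg_superset:
  assumes "good B" "finite S" "{w. bw B w k m \<noteq> 0} \<subseteq> S"
  shows "Opg B M k m = (\<Sum>w\<in>S. M w * bw B w k m)"
  unfolding Opg_def by (rule sum.mono_neutral_left[OF assms(2,3)]) auto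

lemma Opg_Wd: "good B \<Longrightarrow> Opg B M k m = (\<Sum>w\<in>Wd k. M w * bw B w k m)"
  by (rule Opg_superset[OF _ finite_Wd supp_Wd])

lemma Opg_nz: "Opg B M k m \<noteq> 0 \<Longrightarrow> \<exists>w. M w \<noteq> 0 \<and> bw B w k m \<noteq> 0"
  unfolding Opg_def by (drule sum_nz) auto

lemma lower_Opg: "good B \<Longrightarrow> lower (Opg B M)"
  unfolding lower_def using Opg_nz bw_nz by (metis add_leD1 leD)

lemma Opg_cong: "(\<And>w. bw B w k m \<noteq> 0 \<Longrightarrow> M w = N w) \<Longrightarrow> Opg B M k m = Opg B N k m"
  unfolding Opg_def by (rule sum.cong) auto

lemma Opg_add: "Opg B (\<lambda>w. M w + N w) k m = Opg B M k m + Opg B N k m"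
  unfolding Opg_def by (simp add: distrib_right sum.distrib)

lemma Opg_scale: "Opg B (\<lambda>w. c * M w) k m = c * Opg B M k m"
  unfolding Opg_def by (simp add: sum_distrib_left mult.assoc)

lemma Opg_neg: "Opg B (\<lambda>w. - M w) k m = - Opg B M k m"
  unfolding Opg_def by (simp add: sum_negf)

lemma Opg_mone: "good B \<Longrightarrow> Opg B mone = op_id"
proof (intro ext)
  fix k m assume g: "good B"
  have "Opg B mone k m = (\<Sum>w\<in>insert [] {w. bw B w k m \<noteq> 0}. mone w * bw B w k m)"
    by (rule Opg_superset[OF g]) (auto intro: finite_subset[OF supp_Wd[OF g] finite_Wd])
  also have "\<dots> = (\<Sum>w\<in>insert [] {w. bw B w k m \<noteq> 0}. (if [] = w then 1 else 0) * bw B w k m)"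
    by (rule sum.cong) (auto simp: mone_def)
  also have "\<dots> = op_id k m"
    by (subst sum_if_left) (auto intro: finite_subset[OF supp_Wd[OF g] finite_Wd])
  finally show "Opg B mone k m = op_id k m" .
qed



lemma Wd_take: "w \<in> Wd k \<Longrightarrow> take i w \<in> Wd k"
  unfolding Wd_def by (auto dest: in_set_takeD)

lemma Wd_drop: "w \<in> Wd k \<Longrightarrow> drop i w \<in> Wd k"
  unfolding Wd_def by (auto dest: in_set_dropD)

lemma Opg_mprod:
  fixes B :: "'v::finite deg \<Rightarrow> 'v op"
  assumes g: "good B"
  shows "Opg B (mprod M N) = op_comp (Opg B M) (Opg B N)"
proof (intro ext)
  fix k m :: "'v mon"
  let ?W = "Wd k" and ?J = "{j. tdeg j \<le> tdeg k}"
  have fW: "finite ?W" by (rule finite_Wd)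
  have fJ: "finite ?J" by (rule finite_J)
  have s1: "\<And>j. Opg B M k j = (\<Sum>u\<in>?W. M u * bw B u k j)"
    by (rule Opg_Wd[OF g])
  have s2: "\<And>j. j \<in> ?J \<Longrightarrow> Opg B N j m = (\<Sum>v\<in>?W. N v * bw B v j m)"
    by (rule Opg_superset[OF g fW]) (use supp_Wd[OF g] Wd_mono in blast)
  have "op_comp (Opg B M) (Opg B N) k m
      = (\<Sum>j\<in>?J. (\<Sum>u\<in>?W. M u * bw B u k j) * (\<Sum>v\<in>?W. N v * bw B v j m))"
    unfolding op_comp_def by (rule sum.cong[OF refl]) (simp add: s1 s2)
  also have "\<dots> = (\<Sum>j\<in>?J. \<Sum>u\<in>?W. \<Sum>v\<in>?W. (M u * bw B u k j) * (N v * bw B v j m))"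
    by (simp add: sum_product)
  also have "\<dots> = (\<Sum>u\<in>?W. \<Sum>j\<in>?J. \<Sum>v\<in>?W. (M u * bw B u k j) * (N v * bw B v j m))"
    by (rule sum.swap)
  also have "\<dots> = (\<Sum>u\<in>?W. \<Sum>v\<in>?W. \<Sum>j\<in>?J. (M u * bw B u k j) * (N v * bw B v j m))"
    by (rule sum.cong[OF refl]) (rule sum.swap)
  also have "\<dots> = (\<Sum>u\<in>?W. \<Sum>v\<in>?W. M u * N v * bw B (u @ v) k m)"
  proof (intro sum.cong refl)
    fix u v
    have "(\<Sum>j\<in>?J. (M u * bw B u k j) * (N v * bw B v j m)) = M u * N v * (\<Sum>j\<in>?J. bw B u k j * bw B v j m)"
      by (simp add: sum_distrib_left mult_ac)
    also have "\<dots> = M u * N v * bw B (u @ v) k m"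
      by (simp add: bw_append[OF g] op_comp_def)
    finally show "(\<Sum>j\<in>?J. (M u * bw B u k j) * (N v * bw B v j m)) = M u * N v * bw B (u @ v) k m" .
  qed
  also have "\<dots> = (\<Sum>p\<in>?W \<times> ?W. M (fst p) * N (snd p) * bw B (fst p @ snd p) k m)"
    by (simp add: sum.cartesian_product split_beta)
  also have "\<dots> = (\<Sum>p\<in>(\<lambda>(w, i). (take i w, drop i w)) ` (SIGMA w:?W. {..length w}).
                     M (fst p) * N (snd p) * bw B (fst p @ snd p) k m)"
  proof (rule sum.mono_neutral_right)
    show "finite (?W \<times> ?W)" using fW by simp
    show "(\<lambda>(w, i). (take i w, drop i w)) ` (SIGMA w:?W. {..length w}) \<subseteq> ?W \<times> ?W"
      by (auto intro: Wd_take Wd_drop)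
    show "\<forall>p\<in>?W \<times> ?W - (\<lambda>(w, i). (take i w, drop i w)) ` (SIGMA w:?W. {..length w}).
            M (fst p) * N (snd p) * bw B (fst p @ snd p) k m = 0"
    proof
      fix p assume p: "p \<in> ?W \<times> ?W - (\<lambda>(w, i). (take i w, drop i w)) ` (SIGMA w:?W. {..length w})"
      obtain u v where uv: "p = (u, v)" by force
      show "M (fst p) * N (snd p) * bw B (fst p @ snd p) k m = 0"
      proof (rule ccontr)
        assume "M (fst p) * N (snd p) * bw B (fst p @ snd p) k m \<noteq> 0"
        hence "bw B (u @ v) k m \<noteq> 0" using uv by simp
        hence "u @ v \<in> ?W" using supp_Wd[OF g] by blast
        hence "(u @ v, length u) \<in> (SIGMA w:?W. {..length w})" by simp
        hence "(\<lambda>(w, i). (take i w, drop i w)) (u @ v, length u) \<in> (\<lambda>(w, i). (take i w, drop i w)) ` (SIGMA w:?W. {..length w})"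
          by (rule imageI)
        thus False using p uv by simp
      qed
    qed
  qed
  also have "\<dots> = (\<Sum>q\<in>(SIGMA w:?W. {..length w}).
                     M (take (snd q) (fst q)) * N (drop (snd q) (fst q)) * bw B (fst q) k m)"
  proof -
    have inj: "inj_on (\<lambda>(w, i). (take i w, drop i w)) (SIGMA w:?W. {..length w})"
    proof (rule inj_onI, clarsimp)
      fix w i w' i'
      assume "i \<le> length w" "i' \<le> length w'" "take i w = take i' w'" "drop i w = drop i' w'"
      thus "w = w' \<and> i = i'"
        by (metis append_take_drop_id length_take min.absorb2)
    qed
    show ?thesis
      unfolding sum.reindex[OF inj] by (rule sum.cong) auto
  qed
  also have "\<dots> = (\<Sum>w\<in>?W. \<Sum>i\<in>{..length w}. M (take i w) * N (drop i w) * bw B w k m)"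
    by (subst sum.Sigma[OF fW]) (auto simp: split_beta)
  also have "\<dots> = Opg B (mprod M N) k m"
    by (simp add: Opg_Wd[OF g] mprod_def sum_distrib_right)
  finally show "Opg B (mprod M N) k m = op_comp (Opg B M) (Opg B N) k m" by simp
qed



lemma mpow_0: "mpow M 0 = mone" by (simp add: mpow_def)
lemma mpow_Suc: "mpow M (Suc n) = mprod M (mpow M n)" by (simp add: mpow_def)
lemma op_pow_0: "op_pow T 0 = op_id" by (simp add: op_pow_def)
lemma op_pow_Suc: "op_pow T (Suc n) = op_comp T (op_pow T n)" by (simp add: op_pow_def)

lemma Opg_pow: "good B \<Longrightarrow> op_pow (Opg B M) j = Opg B (mpow M j)"
  by (induction j) (simp_all add: op_pow_0 mpow_0 Opg_mone op_pow_Suc mpow_Suc Opg_mprod)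

lemma mpow_long: "M [] = 0 \<Longrightarrow> length w < j \<Longrightarrow> mpow M j w = 0"
proof (induction j arbitrary: w)
  case 0 thus ?case by simp
next
  case (Suc j)
  have "\<forall>i\<in>{..length w}. M (take i w) * mpow M j (drop i w) = 0"
  proof
    fix i assume i: "i \<in> {..length w}"
    show "M (take i w) * mpow M j (drop i w) = 0"
    proof (cases "i = 0")
      case True thus ?thesis using Suc.prems by simp
    next
      case False
      hence "length (drop i w) < j" using Suc.prems i by auto
      thus ?thesis using Suc.IH[OF Suc.prems(1)] by simp
    qed
  qed
  thus ?case unfolding mpow_Suc mprod_def by (rule sum.neutral)
qed

lemma Opg_exp:
  assumes g: "good B" and M0: "M [] = 0"
  shows "op_exp (Opg B M) = Opg B (mExp M)"
proof (intro ext)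
  fix k m
  have "op_exp (Opg B M) k m = (\<Sum>j\<le>tdeg k. (\<Sum>w\<in>Wd k. mpow M j w * bw B w k m) / of_nat (fact j))"
    by (simp add: op_exp_def Opg_pow[OF g] Opg_Wd[OF g])
  also have "\<dots> = (\<Sum>w\<in>Wd k. (\<Sum>j\<le>tdeg k. mpow M j w / of_nat (fact j)) * bw B w k m)"
    by (simp add: sum_divide_distrib sum_distrib_right sum.swap[of _ "{..tdeg k}"])
  also have "\<dots> = (\<Sum>w\<in>Wd k. mExp M w * bw B w k m)"
  proof (rule sum.cong[OF refl])
    fix w assume w: "w \<in> Wd k"
    hence l: "length w \<le> tdeg k" by (simp add: Wd_def)
    have "(\<Sum>j\<le>tdeg k. mpow M j w / of_nat (fact j)) = (\<Sum>j\<le>length w. mpow M j w / of_nat (fact j))"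
      by (rule sum.mono_neutral_right) (use l mpow_long[of M, OF M0] in auto)
    thus "(\<Sum>j\<le>tdeg k. mpow M j w / of_nat (fact j)) * bw B w k m = mExp M w * bw B w k m"
      by (simp add: mExp_def)
  qed
  also have "\<dots> = Opg B (mExp M) k m" by (simp add: Opg_Wd[OF g])
  finally show "op_exp (Opg B M) k m = Opg B (mExp M) k m" .
qed

lemma mpow_mI: "mpow mI j w = (if length w = j then 1 else 0)"
proof (induction j arbitrary: w)
  case 0 thus ?case by (simp add: mpow_0 mone_def)
next
  case (Suc j)
  have "\<forall>i\<in>{..length w}. mI (take i w) * mpow mI j (drop i w) =
          (if 1 = i then (if length w = Suc j then 1 else 0) else 0)"
  proof
    fix i assume i: "i \<in> {..length w}"
    have mi: "mI (take i w) = (if i = 1 then 1 else 0)" using i by (auto simp: mI_def)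
    show "mI (take i w) * mpow mI j (drop i w) = (if 1 = i then (if length w = Suc j then 1 else 0) else 0)"
      unfolding mi Suc.IH using i by auto
  qed
  hence "mpow mI (Suc j) w = (\<Sum>i\<le>length w. (if 1 = i then (if length w = Suc j then 1 else 0) else 0))"
    by (simp add: mpow_Suc mprod_def)
  also have "\<dots> = (if length w = Suc j then 1 else 0)"
    by (cases "length w = Suc j") (auto simp: sum.delta')
  finally show ?case .
qed

lemma helper_sum: "c * sum (\<lambda>w. a w * b w) S / (d::complex) = sum (\<lambda>w. (c * a w / d) * b w) S"
  by (simp add: sum_distrib_left sum_divide_distrib mult_ac)

lemma Opg_log:
  assumes g: "good B"
  shows "op_log1p (Opg B mI) = Opg B mLogI"
proof (intro ext)
  fix k m
  have "op_log1p (Opg B mI) k m = (\<Sum>j\<in>{1..tdeg k}. (-1) ^ (j + 1) * (\<Sum>w\<in>Wd k. mpow mI j w * bw B w k m) / of_nat j)"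
    by (simp add: op_log1p_def Opg_pow[OF g] Opg_Wd[OF g])
  also have "\<dots> = (\<Sum>w\<in>Wd k. (\<Sum>j\<in>{1..tdeg k}. (-1) ^ (j + 1) * mpow mI j w / of_nat j) * bw B w k m)"
  proof -
    have "(\<Sum>j\<in>{1..tdeg k}. (-1) ^ (j + 1) * (\<Sum>w\<in>Wd k. mpow mI j w * bw B w k m) / of_nat j)
        = (\<Sum>j\<in>{1..tdeg k}. \<Sum>w\<in>Wd k. ((-1) ^ (j + 1) * mpow mI j w / of_nat j) * bw B w k m)"
      by (rule sum.cong[OF refl]) (rule helper_sum)
    also have "\<dots> = (\<Sum>w\<in>Wd k. \<Sum>j\<in>{1..tdeg k}. ((-1) ^ (j + 1) * mpow mI j w / of_nat j) * bw B w k m)"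
      by (rule sum.swap)
    also have "\<dots> = (\<Sum>w\<in>Wd k. (\<Sum>j\<in>{1..tdeg k}. (-1) ^ (j + 1) * mpow mI j w / of_nat j) * bw B w k m)"
      by (simp only: sum_distrib_right)
    finally show ?thesis .
  qed
  also have "\<dots> = (\<Sum>w\<in>Wd k. mLogI w * bw B w k m)"
  proof (rule sum.cong[OF refl])
    fix w assume w: "w \<in> Wd k"
    hence l: "length w \<le> tdeg k" by (simp add: Wd_def)
    have "(\<Sum>j\<in>{1..tdeg k}. (-1) ^ (j + 1) * mpow mI j w / of_nat j) =
          (\<Sum>j\<in>{1..tdeg k}. if length w = j then (-1) ^ (length w + 1) / of_nat (length w) else 0)"
      by (rule sum.cong) (auto simp: mpow_mI)
    also have "\<dots> = mLogI w"
      using l by (cases w) (auto simp: mLogI_def sum.delta')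
    finally show "(\<Sum>j\<in>{1..tdeg k}. (-1) ^ (j + 1) * mpow mI j w / of_nat j) * bw B w k m = mLogI w * bw B w k m"
      by simp
  qed
  also have "\<dots> = Opg B mLogI k m" by (simp add: Opg_Wd[OF g])
  finally show "op_log1p (Opg B mI) k m = Opg B mLogI k m" .
qed

lemma Opg_mI:
  assumes g: "good B"
  shows "Opg B mI k m = B (mdeg k - mdeg m) k m"
proof -
  let ?c = "mdeg k - mdeg m"
  let ?S = "insert [?c] {w. bw B w k m \<noteq> 0}"
  have fS: "finite ?S" by (auto intro: finite_subset[OF supp_Wd[OF g] finite_Wd])
  have "Opg B mI k m = (\<Sum>w\<in>?S. mI w * bw B w k m)"
    by (rule Opg_superset[OF g fS]) auto
  also have "\<dots> = (\<Sum>w\<in>?S. (if [?c] = w then B ?c k m else 0) * 1)"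
  proof (rule sum.cong[OF refl])
    fix w
    show "mI w * bw B w k m = (if [?c] = w then B ?c k m else 0) * 1"
    proof (cases "length w = 1")
      case True
      then obtain n where n: "w = [n]" by (cases w) auto
      have bn: "bw B w k m = B n k m"
        using n comp_id_right[OF good_lower[OF g]] by simp
      show ?thesis
      proof (cases "n = ?c")
        case True thus ?thesis using n bn by (simp add: mI_def)
      next
        case False
        have "B n k m = 0"
        proof (rule ccontr)
          assume "B n k m \<noteq> 0"
          from good_hom[OF g this] have "mdeg k = mdeg m + n" by simp
          hence "n = ?c" by simp
          with False show False by simp
        qed
        thus ?thesis using n bn False by (simp add: mI_def)
      qed
    next
      case False thus ?thesis by (auto simp: mI_def)
    qed
  qed
  also have "\<dots> = B ?c k m * 1"
    by (rule sum_if_left[OF fS]) simp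
  finally show ?thesis by simp
qed

lemma Opg_eDelta:
  assumes g: "good B"
  shows "Opg B (eDelta lam M) = op_comp (op_lin (- lam)) (op_comp (Opg B M) (op_lin lam))"
proof (intro ext)
  fix k m
  let ?c = "exp (ldot (- lam) (mdeg k)) * exp (ldot lam (mdeg m))"
  have "Opg B (eDelta lam M) k m = Opg B (\<lambda>w. ?c * M w) k m"
  proof (rule Opg_cong)
    fix w assume "bw B w k m \<noteq> 0"
    from bw_nz[OF g this] have "mdeg k = mdeg m + sum_list w" by simp
    hence "ldot lam (mdeg k) = ldot lam (mdeg m) + ldot lam (sum_list w)" by (simp add: ldot_add)
    hence "- ldot lam (sum_list w) = ldot (- lam) (mdeg k) + ldot lam (mdeg m)"
      by (simp add: ldot_uminus)
    thus "eDelta lam M w = ?c * M w"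
      by (simp add: eDelta_def exp_add[symmetric])
  qed
  also have "\<dots> = ?c * Opg B M k m" by (rule Opg_scale)
  also have "\<dots> = op_comp (op_lin (- lam)) (op_comp (Opg B M) (op_lin lam)) k m"
    by (simp add: comp_lin_left comp_lin_right[OF lower_Opg[OF g]])
  finally show "Opg B (eDelta lam M) k m = op_comp (op_lin (- lam)) (op_comp (Opg B M) (op_lin lam)) k m" .
qed



lemma exp_neg_mult: "exp (- a) * (exp a * x) = (x::complex)"
  by (simp add: mult.assoc[symmetric] exp_add[symmetric])

lemma lin_inv: "op_comp (op_lin (- lam)) (op_comp (op_lin lam) X) = X"
  by (intro ext) (simp add: comp_lin_left ldot_uminus exp_neg_mult)

lemma lin_inv': "op_comp (op_lin lam) (op_comp (op_lin (- lam)) X) = X"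
  by (intro ext) (simp add: comp_lin_left ldot_uminus exp_minus_inverse mult.assoc[symmetric] exp_add[symmetric])

lemma Opg_V:
  fixes B :: "'v::finite deg \<Rightarrow> 'v op"
  assumes g: "good B"
  shows "hsum (\<lambda>n. if exp (ldot lam n) \<noteq> 1
                   then op_scale (1 / (1 - exp (ldot lam n))) (hom_part (Opg B mLogI) n)
                   else op_zero) = Opg B (dem lam)"
proof (intro ext)
  fix k m :: "'v mon"
  let ?c = "mdeg k - mdeg m"
  have cong: "Opg B (dem lam) k m = Opg B (\<lambda>w. (if exp (ldot lam ?c) \<noteq> 1 then 1 / (1 - exp (ldot lam ?c)) else 0) * mLogI w) k m"
  proof (rule Opg_cong)
    fix w assume "bw B w k m \<noteq> 0"
    from bw_nz[OF g this] have "sum_list w = ?c" by simp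
    thus "dem lam w = (if exp (ldot lam ?c) \<noteq> 1 then 1 / (1 - exp (ldot lam ?c)) else 0) * mLogI w"
      by (auto simp: dem_def mLogI_def)
  qed
  show "hsum (\<lambda>n. if exp (ldot lam n) \<noteq> 1
                   then op_scale (1 / (1 - exp (ldot lam n))) (hom_part (Opg B mLogI) n)
                   else op_zero) k m = Opg B (dem lam) k m"
    unfolding cong Opg_scale by (simp add: hsum_def op_scale_def hom_part_def op_zero_def)
qed

lemma step_sem:
  fixes B :: "'v::finite deg \<Rightarrow> 'v op"
  assumes g: "good B"
  shows "sem_step lam (op_comp (op_lin lam) (Opg B (\<lambda>a. mone a + mI a))) = op_comp (op_lin lam) (Opg B (sem lam))"
proof -
  let ?G = "op_comp (op_lin lam) (Opg B (\<lambda>a. mone a + mI a))"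
  let ?P = "Opg B (\<lambda>a. mone a + mI a)"
  let ?E = "Opg B (mExp (dem lam))"
  let ?Q = "Opg B (mExp (\<lambda>a. - dem lam a))"
  let ?L = "op_lin lam" and ?L' = "op_lin (- lam)"
  have N: "op_minus (op_comp (op_lin (- lam)) ?G) op_id = Opg B mI"
    by (intro ext) (simp add: lin_inv op_minus_def Opg_add Opg_mone[OF g])
  have UV: "op_uminus (Opg B (dem lam)) = Opg B (\<lambda>a. - dem lam a)"
    by (intro ext) (simp add: op_uminus_def Opg_neg)
  have E1: "op_exp (Opg B (dem lam)) = ?E"
    by (rule Opg_exp[OF g]) (simp add: dem_def)
  have E2: "op_exp (Opg B (\<lambda>a. - dem lam a)) = ?Q"
    by (rule Opg_exp[OF g]) (simp add: dem_def)
  have lhs: "sem_step lam ?G = op_comp ?E (op_comp ?G ?Q)"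
    unfolding sem_step_def Let_def N Opg_log[OF g] Opg_V[OF g] UV E1 E2 ..
  have lE: "lower ?E" and lP: "lower ?P" and lQ: "lower ?Q" by (rule lower_Opg[OF g])+
  have "Opg B (sem lam) = op_comp (op_comp (op_comp ?L' (op_comp ?E ?L)) ?P) ?Q"
    unfolding sem_def Opg_mprod[OF g] Opg_eDelta[OF g] ..
  also have "\<dots> = op_comp (op_comp ?L' (op_comp ?E (op_comp ?L ?P))) ?Q"
    by (simp add: op_comp_assoc lower_comp lower_lin)
  also have "\<dots> = op_comp ?L' (op_comp (op_comp ?E (op_comp ?L ?P)) ?Q)"
    by (rule op_comp_assoc) (intro lower_comp lP)
  also have "\<dots> = op_comp ?L' (op_comp ?E (op_comp ?G ?Q))"
    by (subst op_comp_assoc) (intro lower_comp lP, rule refl)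
  finally have "op_comp ?L (Opg B (sem lam)) = op_comp ?L (op_comp ?L' (op_comp ?E (op_comp ?G ?Q)))"
    by simp
  also have "\<dots> = op_comp ?E (op_comp ?G ?Q)" by (rule lin_inv')
  finally show ?thesis using lhs by simp
qed



definition Pset :: "'a list \<Rightarrow> 'a list list set" where
  "Pset a = {ps. concat ps = a \<and> (\<forall>p\<in>set ps. p \<noteq> [])}"

lemma length_le_concat: "(\<forall>p\<in>set ps. p \<noteq> []) \<Longrightarrow> length ps \<le> length (concat ps)"
proof (induction ps)
  case Nil thus ?case by simp
next
  case (Cons a ps)
  hence "length ps \<le> length (concat ps)" "1 \<le> length a" by (auto simp: Suc_le_eq)
  thus ?case by simp
qed

lemma length_mem_concat: "p \<in> set ps \<Longrightarrow> length p \<le> length (concat ps)"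
  by (induction ps) auto

lemma finite_Pset: "finite (Pset a)"
proof -
  have "Pset a \<subseteq> {ps. set ps \<subseteq> {p. set p \<subseteq> set a \<and> length p \<le> length a} \<and> length ps \<le> length a}"
    unfolding Pset_def using length_le_concat length_mem_concat by fastforce
  moreover have "finite {ps. set ps \<subseteq> {p. set p \<subseteq> set a \<and> length p \<le> length a} \<and> length ps \<le> length a}"
    by (intro finite_lists_length_le finite_lists_length_le[of "set a"]) simp
  ultimately show ?thesis by (rule finite_subset)
qed

lemma Pset_Nil: "Pset [] = {[]}"
  unfolding Pset_def by auto

lemma Nil_in_Pset: "([] \<in> Pset a) = (a = [])"
  unfolding Pset_def by auto

lemma Pset_sum:
  assumes a: "a \<noteq> []"
  shows "sum g (Pset a) = (\<Sum>i\<in>{1..length a}. \<Sum>ps\<in>Pset (drop i a). g (take i a # ps))"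
proof -
  let ?h = "\<lambda>(i, ps). take i a # ps"
  let ?S = "SIGMA i:{1..length a}. Pset (drop i a)"
  have img: "Pset a = ?h ` ?S"
  proof
    show "?h ` ?S \<subseteq> Pset a"
    proof
      fix x assume "x \<in> ?h ` ?S"
      then obtain i ps where x: "x = take i a # ps" and i: "1 \<le> i" "i \<le> length a" and ps: "ps \<in> Pset (drop i a)"
        by auto
      show "x \<in> Pset a"
        using ps i a x unfolding Pset_def by (auto simp: take_eq_Nil)
    qed
    show "Pset a \<subseteq> ?h ` ?S"
    proof
      fix qs assume qs: "qs \<in> Pset a"
      then obtain p ps where pp: "qs = p # ps" using a unfolding Pset_def by (cases qs) auto
      have p: "p \<noteq> []" "a = p @ concat ps" "\<forall>p\<in>set ps. p \<noteq> []" using qs pp unfolding Pset_def by auto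
      have "take (length p) a = p" "drop (length p) a = concat ps" using p(2) by auto
      moreover have "length p \<in> {1..length a}" using p by (cases p) auto
      moreover have "ps \<in> Pset (drop (length p) a)" using p calculation unfolding Pset_def by auto
      ultimately show "qs \<in> ?h ` ?S" using pp by (auto intro!: image_eqI[where x="(length p, ps)"])
    qed
  qed
  have inj: "inj_on ?h ?S"
  proof (rule inj_onI, clarsimp)
    fix i ps j qs
    assume "i \<le> length a" "j \<le> length a" "take i a = take j a"
    thus "i = j" by (metis length_take min.absorb2)
  qed
  have "sum g (Pset a) = sum (g \<circ> ?h) ?S" unfolding img by (rule sum.reindex[OF inj])
  also have "\<dots> = (\<Sum>i\<in>{1..length a}. \<Sum>ps\<in>Pset (drop i a). g (take i a # ps))"
    by (subst sum.Sigma) (auto simp: finite_Pset split_beta intro!: sum.cong)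
  finally show ?thesis .
qed

definition Qm :: "'v mould \<Rightarrow> 'v deg list \<Rightarrow> 'v mould" where
  "Qm S b a = (\<Sum>ps\<in>Pset a. if map sum_list ps = b then prod_list (map S ps) else 0)"

definition Sc :: "'v mould \<Rightarrow> 'v deg \<Rightarrow> 'v mould" where
  "Sc S c w = (if w \<noteq> [] \<and> sum_list w = c then S w else 0)"

definition Bc :: "('v::finite deg \<Rightarrow> 'v op) \<Rightarrow> 'v mould \<Rightarrow> 'v deg \<Rightarrow> 'v op" where
  "Bc B S c = Opg B (Sc S c)"

lemma good_Bc:
  fixes B :: "'v::finite deg \<Rightarrow> 'v op"
  assumes g: "good B" shows "good (Bc B S)"
  unfolding good_def
proof (intro allI impI)
  fix n and k m :: "'v mon" assume "Bc B S n k m \<noteq> 0"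
  then obtain w where w: "Sc S n w \<noteq> 0" "bw B w k m \<noteq> 0" unfolding Bc_def by (blast dest: Opg_nz)
  from w(1) have "w \<noteq> []" "sum_list w = n" by (auto simp: Sc_def split: if_splits)
  with bw_nz[OF g w(2)] show "mdeg k = mdeg m + n \<and> tdeg m < tdeg k"
    by (cases w) auto
qed

lemma Qm_Nil: "Qm S [] = mone"
proof
  fix a
  have "Qm S [] a = (\<Sum>ps\<in>Pset a. if [] = ps then 1 else 0)"
    unfolding Qm_def by (rule sum.cong) auto
  also have "\<dots> = mone a" by (simp add: finite_Pset Nil_in_Pset mone_def)
  finally show "Qm S [] a = mone a" .
qed

lemma Qm_Cons: "mprod (Sc S c) (Qm S b) = Qm S (c # b)"
proof
  fix a
  show "mprod (Sc S c) (Qm S b) a = Qm S (c # b) a"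
  proof (cases "a = []")
    case True thus ?thesis by (simp add: True mprod_def Sc_def Qm_def Pset_Nil)
  next
    case False
    have "{..length a} = insert 0 {1..length a}" by auto
    hence "mprod (Sc S c) (Qm S b) a = (\<Sum>i\<in>{1..length a}. Sc S c (take i a) * Qm S b (drop i a))"
      by (simp add: mprod_def Sc_def)
    also have "\<dots> = (\<Sum>i\<in>{1..length a}. \<Sum>ps\<in>Pset (drop i a).
        if map sum_list (take i a # ps) = c # b then prod_list (map S (take i a # ps)) else 0)"
    proof (rule sum.cong[OF refl])
      fix i assume i: "i \<in> {1..length a}"
      hence ne: "take i a \<noteq> []" and i0: "i \<noteq> 0" using False by auto
      show "Sc S c (take i a) * Qm S b (drop i a) = (\<Sum>ps\<in>Pset (drop i a).
        if map sum_list (take i a # ps) = c # b then prod_list (map S (take i a # ps)) else 0)"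
        unfolding Qm_def sum_distrib_left by (rule sum.cong) (auto simp: Sc_def ne i0 False)
    qed
    also have "\<dots> = Qm S (c # b) a"
      unfolding Qm_def by (rule Pset_sum[OF False, symmetric])
    finally show ?thesis .
  qed
qed

lemma bw_Bc: "good B \<Longrightarrow> bw (Bc B S) b = Opg B (Qm S b)"
proof (induction b)
  case Nil thus ?case by (simp add: Qm_Nil Opg_mone)
next
  case (Cons c b)
  thus ?case by (simp add: Bc_def Opg_mprod[OF Cons.prems, symmetric] Qm_Cons)
qed

lemma mcomp_Pset: "mcomp M S a = (\<Sum>ps\<in>Pset a. M (map sum_list ps) * prod_list (map S ps))"
proof -
  have set: "{ps. concat ps = a \<and> ps \<noteq> [] \<and> (\<forall>p\<in>set ps. p \<noteq> [])} = Pset a - {[]}"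
    unfolding Pset_def by auto
  show ?thesis
  proof (cases "a = []")
    case True
    have "Pset a - {[]} = {}" using True by (simp add: Pset_Nil)
    thus ?thesis unfolding mcomp_def set using True by (simp add: Pset_Nil)
  next
    case False
    hence "Pset a - {[]} = Pset a" using Nil_in_Pset by auto
    thus ?thesis unfolding mcomp_def set using False by simp
  qed
qed

lemma Opg_comp:
  fixes B :: "'v::finite deg \<Rightarrow> 'v op"
  assumes g: "good B"
  shows "Opg (Bc B S) M = Opg B (mcomp M S)"
proof (intro ext)
  fix k m :: "'v mon"
  let ?W = "Wd k"
  let ?T = "?W \<union> (\<Union>a\<in>?W. map sum_list ` Pset a)"
  have fT: "finite ?T" by (auto simp: finite_Wd finite_Pset)
  have "Opg (Bc B S) M k m = (\<Sum>b\<in>?T. M b * bw (Bc B S) b k m)"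
    by (rule Opg_superset[OF good_Bc[OF g] fT]) (use supp_Wd[OF good_Bc[OF g]] in blast)
  also have "\<dots> = (\<Sum>b\<in>?T. \<Sum>a\<in>?W. M b * Qm S b a * bw B a k m)"
    by (simp add: bw_Bc[OF g] Opg_Wd[OF g] sum_distrib_left mult.assoc)
  also have "\<dots> = (\<Sum>a\<in>?W. \<Sum>b\<in>?T. M b * Qm S b a * bw B a k m)"
    by (rule sum.swap)
  also have "\<dots> = (\<Sum>a\<in>?W. mcomp M S a * bw B a k m)"
  proof (rule sum.cong[OF refl])
    fix a assume a: "a \<in> ?W"
    have "(\<Sum>b\<in>?T. M b * Qm S b a) = (\<Sum>b\<in>?T. \<Sum>ps\<in>Pset a. if map sum_list ps = b then M b * prod_list (map S ps) else 0)"
      unfolding Qm_def sum_distrib_left by (intro sum.cong refl) auto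
    also have "\<dots> = (\<Sum>ps\<in>Pset a. \<Sum>b\<in>?T. if map sum_list ps = b then M b * prod_list (map S ps) else 0)"
      by (rule sum.swap)
    also have "\<dots> = (\<Sum>ps\<in>Pset a. M (map sum_list ps) * prod_list (map S ps))"
    proof (rule sum.cong[OF refl])
      fix ps assume "ps \<in> Pset a"
      hence "map sum_list ps \<in> ?T" using a by blast
      thus "(\<Sum>b\<in>?T. if map sum_list ps = b then M b * prod_list (map S ps) else 0) = M (map sum_list ps) * prod_list (map S ps)"
        using fT by (simp add: sum.delta)
    qed
    also have "\<dots> = mcomp M S a" by (rule mcomp_Pset[symmetric])
    finally show "(\<Sum>b\<in>?T. M b * Qm S b a * bw B a k m) = mcomp M S a * bw B a k m"
      by (simp add: sum_distrib_right[symmetric])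
  qed
  also have "\<dots> = Opg B (mcomp M S) k m" by (simp add: Opg_Wd[OF g])
  finally show "Opg (Bc B S) M k m = Opg B (mcomp M S) k m" .
qed



definition lead :: "'v::finite ser \<Rightarrow> complex \<Rightarrow> 'v mon \<Rightarrow> bool" where
  "lead p c u \<longleftrightarrow> (\<forall>k. tdeg k \<le> tdeg u \<longrightarrow> p k = (if k = u then c else 0))"

lemma tdeg_add: "tdeg (u + v) = tdeg u + tdeg (v::'v::finite mon)"
  unfolding tdeg_def by (simp add: sum.distrib)

lemma tdeg_split: "(\<forall>i. j i \<le> k i) \<Longrightarrow> tdeg j + tdeg (\<lambda>i. k i - j i) = tdeg (k::'v::finite mon)"
  unfolding tdeg_def by (simp add: sum.distrib[symmetric])

lemma lead_mult:
  fixes p q :: "'v::finite ser"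
  assumes p: "lead p c u" and q: "lead q d v"
  shows "lead (ser_mult p q) (c * d) (u + v)"
  unfolding lead_def
proof (intro allI impI)
  fix k :: "'v mon" assume k: "tdeg k \<le> tdeg (u + v)"
  let ?D = "{j. \<forall>i. j i \<le> k i}"
  have fD: "finite ?D" by (rule finite_subset[OF _ finite_bounded[of "tdeg k"]]) (auto intro: order_trans[OF _ le_tdeg])
  have trm: "p j * q (\<lambda>i. k i - j i) = (if j = u then (if k = u + v then c * d else 0) else 0)" if j: "j \<in> ?D" for j
  proof -
    have s: "tdeg j + tdeg (\<lambda>i. k i - j i) = tdeg k" using j tdeg_split by auto
    consider "tdeg j < tdeg u" | "tdeg j > tdeg u" | "tdeg j = tdeg u" by linarith
    thus ?thesis
    proof cases
      case 1
      hence "p j = 0" "j \<noteq> u" using p unfolding lead_def by auto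
      thus ?thesis by simp
    next
      case 2
      hence "tdeg (\<lambda>i. k i - j i) < tdeg v" using s k by (simp add: tdeg_add)
      hence "q (\<lambda>i. k i - j i) = 0" using q unfolding lead_def
        by (metis less_imp_le less_irrefl)
      thus ?thesis using 2 by auto
    next
      case 3
      have pj: "p j = (if j = u then c else 0)" using p 3 unfolding lead_def by simp
      have "tdeg (\<lambda>i. k i - j i) \<le> tdeg v" using s k 3 by (simp add: tdeg_add)
      hence qj: "q (\<lambda>i. k i - j i) = (if (\<lambda>i. k i - j i) = v then d else 0)" using q unfolding lead_def by simp
      have "((\<lambda>i. k i - u i) = v) = (k = u + v)" if "j = u"
      proof
        assume a: "(\<lambda>i. k i - u i) = v"
        show "k = u + v"
        proof
          fix i
          have "u i \<le> k i" using j that by auto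
          moreover have "k i - u i = v i" using a by (simp add: fun_eq_iff)
          ultimately show "k i = (u + v) i" by (simp add: plus_fun_def)
        qed
      next
        assume "k = u + v"
        thus "(\<lambda>i. k i - u i) = v" by (simp add: fun_eq_iff plus_fun_def)
      qed
      thus ?thesis using pj qj by auto
    qed
  qed
  have "ser_mult p q k = (\<Sum>j\<in>?D. if j = u then (if k = u + v then c * d else 0) else 0)"
    unfolding ser_mult_def by (rule sum.cong[OF refl]) (rule trm)
  also have "\<dots> = (if k = u + v then c * d else 0)"
    using fD by (auto simp: sum.delta plus_fun_def)
  finally show "ser_mult p q k = (if k = u + v then c * d else 0)" .
qed

lemma tdeg_zero: "tdeg k = 0 \<longleftrightarrow> k = (\<lambda>_. 0::nat)"
  unfolding tdeg_def by (auto simp: fun_eq_iff)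

lemma lead_one: "lead (ser_one :: 'v::finite ser) 1 (\<lambda>_. 0)"
  unfolding lead_def ser_one_def by (auto simp: tdeg_zero[unfolded tdeg_def] tdeg_def)

lemma tdeg_unitv: "tdeg (unitv j :: 'v::finite mon) = 1"
  unfolding tdeg_def unitv_def by simp

lemma unitv_inj: "unitv i = unitv j \<longleftrightarrow> i = j"
  unfolding unitv_def by (auto simp: fun_eq_iff)

lemma tdeg_one: "tdeg (k::'v::finite mon) = 1 \<Longrightarrow> \<exists>j. k = unitv j"
proof -
  assume t: "tdeg k = 1"
  have "\<exists>j. k j \<noteq> 0"
  proof (rule ccontr)
    assume "\<not> (\<exists>j. k j \<noteq> 0)"
    hence "k = (\<lambda>_. 0)" by auto
    thus False using t by (simp add: tdeg_def)
  qed
  then obtain j where j: "k j \<noteq> 0" by blast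
  have kj: "k j = 1" using j le_tdeg[of k j] t by simp
  have "k i = 0" if "i \<noteq> j" for i
  proof -
    have "sum k {i, j} \<le> sum k UNIV" by (rule sum_mono2) auto
    thus ?thesis using that t kj unfolding tdeg_def by simp
  qed
  hence "k = unitv j" using kj unfolding unitv_def by auto
  thus ?thesis by blast
qed

lemma lead_f:
  assumes f0: "\<forall>i. f i (\<lambda>_. 0) = 0"
    and flin: "\<forall>i j. f i (unitv j) = (if j = i then exp (lam i) else 0)"
  shows "lead (f i) (exp (lam i)) (unitv i)"
  unfolding lead_def tdeg_unitv
proof (intro allI impI)
  fix k :: "'a mon" assume k: "tdeg k \<le> 1"
  show "f i k = (if k = unitv i then exp (lam i) else 0)"
  proof (cases "tdeg k = 0")
    case True
    hence "k = (\<lambda>_. 0)" using tdeg_zero by blast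
    moreover have "(\<lambda>_. 0::nat) \<noteq> unitv i" by (auto simp: unitv_def fun_eq_iff)
    ultimately show ?thesis using f0 by simp
  next
    case False
    hence "tdeg k = 1" using k by simp
    then obtain j where "k = unitv j" using tdeg_one by blast
    thus ?thesis using flin by (simp add: unitv_inj)
  qed
qed

lemma lead_pow: "lead p c u \<Longrightarrow> lead (ser_pow p n) (c ^ n) (\<lambda>i. n * u i)"
proof (induction n)
  case 0 thus ?case using lead_one by (simp add: ser_pow_def)
next
  case (Suc n)
  have "lead (ser_mult p (ser_pow p n)) (c * c ^ n) (u + (\<lambda>i. n * u i))"
    by (rule lead_mult[OF Suc.prems Suc.IH[OF Suc.prems]])
  moreover have "u + (\<lambda>i. n * u i) = (\<lambda>i. Suc n * u i)" by (simp add: fun_eq_iff plus_fun_def)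
  ultimately show ?case by (simp add: ser_pow_def)
qed

lemma lead_fold:
  assumes f0: "\<forall>i. f i (\<lambda>_. 0) = 0"
    and flin: "\<forall>i j. f i (unitv j) = (if j = i then exp (lam i) else 0)"
  shows "distinct xs \<Longrightarrow> lead (foldr (\<lambda>i acc. ser_mult (ser_pow (f i) (m i)) acc) xs ser_one)
            (\<Prod>x\<in>set xs. exp (lam x) ^ m x) (\<lambda>y. if y \<in> set xs then m y else 0)"
proof (induction xs)
  case Nil thus ?case using lead_one by simp
next
  case (Cons x xs)
  have h: "lead (ser_pow (f x) (m x)) (exp (lam x) ^ m x) (\<lambda>y. m x * unitv x y)"
    by (rule lead_pow[OF lead_f[OF f0 flin]])
  have "lead (ser_mult (ser_pow (f x) (m x)) (foldr (\<lambda>i acc. ser_mult (ser_pow (f i) (m i)) acc) xs ser_one))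
          (exp (lam x) ^ m x * (\<Prod>x\<in>set xs. exp (lam x) ^ m x))
          ((\<lambda>y. m x * unitv x y) + (\<lambda>y. if y \<in> set xs then m y else 0))"
    by (rule lead_mult[OF h Cons.IH]) (use Cons.prems in simp)
  moreover have "(\<lambda>y. m x * unitv x y) + (\<lambda>y. if y \<in> set xs then m y else 0) = (\<lambda>y. if y \<in> set (x # xs) then m y else 0)"
    using Cons.prems by (auto simp: fun_eq_iff plus_fun_def unitv_def)
  ultimately show ?case using Cons.prems by simp
qed

lemma enum_v: "distinct (enum_v :: 'v::finite list) \<and> set (enum_v :: 'v list) = UNIV"
proof -
  obtain xs where "set xs = (UNIV::'v set)" "distinct xs"
    using finite_distinct_list[of "UNIV::'v set"] by auto
  hence "\<exists>xs::'v list. distinct xs \<and> set xs = UNIV" by blast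
  from someI_ex[OF this] show ?thesis unfolding enum_v_def by simp
qed

lemma set_enum_v: "set (enum_v::'v::finite list) = UNIV"
  using enum_v by blast

lemma distinct_enum_v: "distinct (enum_v::'v::finite list)"
  using enum_v by blast

lemma exp_ldot: "exp (ldot lam (mdeg m)) = (\<Prod>x\<in>UNIV. exp (lam x) ^ m x)"
  unfolding ldot_def mdeg_def by (simp add: exp_sum exp_of_nat_mult[symmetric] mult.commute)

lemma comp_op_lead:
  assumes f0: "\<forall>i. f i (\<lambda>_. 0) = 0"
    and flin: "\<forall>i j. f i (unitv j) = (if j = i then exp (lam i) else 0)"
  shows "lead (\<lambda>k. comp_op f k m) (exp (ldot lam (mdeg m))) m"
proof -
  have "lead (foldr (\<lambda>i acc. ser_mult (ser_pow (f i) (m i)) acc) enum_v ser_one)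
            (\<Prod>x\<in>set enum_v. exp (lam x) ^ m x) (\<lambda>y. if y \<in> set enum_v then m y else 0)"
    by (rule lead_fold[OF f0 flin]) (simp add: distinct_enum_v)
  moreover have "(\<lambda>k. comp_op f k m) = foldr (\<lambda>i acc. ser_mult (ser_pow (f i) (m i)) acc) enum_v ser_one"
    by (simp add: fun_eq_iff comp_op_def)
  ultimately show ?thesis by (simp add: exp_ldot set_enum_v)
qed

lemma good_opB:
  fixes lam :: "'v::finite \<Rightarrow> complex"
  assumes f0: "\<forall>i. f i (\<lambda>_. 0) = 0"
    and flin: "\<forall>i j. f i (unitv j) = (if j = i then exp (lam i) else 0)"
  shows "good (opB lam f)"
  unfolding good_def
proof (intro allI impI)
  fix n and k m :: "'v mon"
  assume nz: "opB lam f n k m \<noteq> 0"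
  hence h: "mdeg k = mdeg m + n" and X: "exp (ldot (- lam) (mdeg k)) * comp_op f k m - op_id k m \<noteq> 0"
    by (auto simp: opB_def hom_part_def op_minus_def comp_lin_left split: if_splits)
  have "tdeg m < tdeg k"
  proof (rule ccontr)
    assume "\<not> tdeg m < tdeg k"
    hence le: "tdeg k \<le> tdeg m" by simp
    have F: "comp_op f k m = (if k = m then exp (ldot lam (mdeg m)) else 0)"
      using comp_op_lead[OF f0 flin, of m] le unfolding lead_def by blast
    have "exp (ldot (- lam) (mdeg k)) * comp_op f k m - op_id k m = 0"
      by (auto simp: F op_id_def ldot_uminus exp_add[symmetric])
    with X show False by simp
  qed
  with h show "mdeg k = mdeg m + n \<and> tdeg m < tdeg k" by simp
qed

lemma base_F:
  fixes lam :: "'v::finite \<Rightarrow> complex"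
  assumes f0: "\<forall>i. f i (\<lambda>_. 0) = 0"
    and flin: "\<forall>i j. f i (unitv j) = (if j = i then exp (lam i) else 0)"
  shows "comp_op f = op_comp (op_lin lam) (Opg (opB lam f) (\<lambda>a. mone a + mI a))"
proof (intro ext)
  fix k m :: "'v mon"
  have g: "good (opB lam f)" by (rule good_opB[OF f0 flin])
  have "op_comp (op_lin lam) (Opg (opB lam f) (\<lambda>a. mone a + mI a)) k m
     = exp (ldot lam (mdeg k)) * (op_id k m + opB lam f (mdeg k - mdeg m) k m)"
    by (simp add: comp_lin_left Opg_add Opg_mone[OF g] Opg_mI[OF g])
  also have "\<dots> = comp_op f k m"
    by (simp add: opB_def hom_part_def op_minus_def comp_lin_left ldot_uminus exp_neg_mult mult.assoc[symmetric] exp_add[symmetric])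
  finally show "comp_op f k m = op_comp (op_lin lam) (Opg (opB lam f) (\<lambda>a. mone a + mI a)) k m" by simp
qed



lemma opBw_bw: "opBw lam f w = bw (opB lam f) w"
  by (induction w) (simp_all add: opBw_def)

lemma bw_letters: "bw B w k m \<noteq> 0 \<Longrightarrow> n \<in> set w \<Longrightarrow> B n \<noteq> op_zero"
proof (induction w arbitrary: k)
  case Nil thus ?case by simp
next
  case (Cons a w)
  from op_comp_nz[OF Cons.prems(1)[simplified]] obtain j where
    j: "B a k j \<noteq> 0" "bw B w j m \<noteq> 0" by blast
  show ?case
  proof (cases "n = a")
    case True
    thus ?thesis using j(1) by (auto simp: op_zero_def)
  next
    case False
    thus ?thesis using Cons.IH[OF j(2)] Cons.prems(2) by simp
  qed
qed

lemma word_sum_Opg: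
  fixes lam :: "'v::finite \<Rightarrow> complex"
  assumes g: "good (opB lam f)" and Asupp: "\<forall>n. opB lam f n \<noteq> op_zero \<longrightarrow> n \<in> A"
  shows "word_sum lam f A M = Opg (opB lam f) M"
proof (intro ext)
  fix k m :: "'v mon"
  let ?F = "{w. bw (opB lam f) w k m \<noteq> 0}"
  have fF: "finite ?F" by (rule finite_subset[OF supp_Wd[OF g] finite_Wd])
  have sub: "?F \<subseteq> lists A"
    using bw_letters[of "opB lam f"] Asupp by blast
  have "word_sum lam f A M k m = infsum (\<lambda>w. M w * bw (opB lam f) w k m) (lists A)"
    by (simp add: word_sum_def opBw_bw)
  also have "\<dots> = infsum (\<lambda>w. M w * bw (opB lam f) w k m) ?F"
    by (rule infsum_cong_neutral) (use sub in auto)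
  also have "\<dots> = Opg (opB lam f) M k m"
    using fF by (simp add: Opg_def)
  finally show "word_sum lam f A M k m = Opg (opB lam f) M k m" .
qed

lemma sem_Nil: "sem lam [] = 1"
  by (simp add: sem_def mprod_def eDelta_def mExp_def mpow_0 mone_def mI_def ldot_def)

lemma mcomp_Nil:
  fixes M N :: "'v mould"
  shows "mcomp M N [] = M []"
proof -
  have e: "{ps. concat ps = [] \<and> ps \<noteq> [] \<and> (\<forall>p\<in>set ps. p \<noteq> [])} = ({} :: 'v deg list list set)"
    by (auto simp: neq_Nil_conv)
  show ?thesis unfolding mcomp_def e by simp
qed

lemma semr_Nil: "r \<ge> 1 \<Longrightarrow> semr lam r [] = 1"
proof (induction r rule: dec_induct)
  case base thus ?case by (simp add: semr_def sem_Nil)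
next
  case (step n)
  hence "semr lam (Suc n) = mcomp (sem lam) (semr lam n)"
    by (cases n) (auto simp: semr_def)
  thus ?case by (simp add: mcomp_Nil sem_Nil)
qed

lemma semr_Suc: "r \<ge> 1 \<Longrightarrow> semr lam (Suc r) = mcomp (sem lam) (semr lam r)"
  by (cases r) (auto simp: semr_def)

lemma Opg_split:
  fixes B :: "'v::finite deg \<Rightarrow> 'v op"
  assumes g: "good B" and S0: "S [] = 1"
  shows "Opg B S = Opg (Bc B S) (\<lambda>a. mone a + mI a)"
proof (intro ext)
  fix k m :: "'v mon"
  let ?c = "mdeg k - mdeg m"
  have "Opg B S k m = Opg B (\<lambda>w. mone w + Sc S ?c w) k m"
  proof (rule Opg_cong)
    fix w assume "bw B w k m \<noteq> 0"
    from bw_nz[OF g this] have "sum_list w = ?c" by simp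
    thus "S w = mone w + Sc S ?c w" using S0 by (auto simp: mone_def Sc_def)
  qed
  also have "\<dots> = op_id k m + Bc B S ?c k m"
    by (simp add: Opg_add Opg_mone[OF g] Bc_def)
  also have "\<dots> = Opg (Bc B S) (\<lambda>a. mone a + mI a) k m"
    by (simp add: Opg_add Opg_mone[OF good_Bc[OF g]] Opg_mI[OF good_Bc[OF g]])
  finally show "Opg B S k m = Opg (Bc B S) (\<lambda>a. mone a + mI a) k m" .
qed

theorem mainTheorem5:
  fixes lam :: "'v::finite \<Rightarrow> complex"
    and f :: "'v \<Rightarrow> 'v ser"
    and A :: "'v deg set"
    and r :: nat
  assumes f0: "\<forall>i. f i (\<lambda>_. 0) = 0"
    and flin: "\<forall>i j. f i (unitv j) = (if j = i then exp (lam i) else 0)"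
    and fana: "\<exists>\<rho>>0. \<forall>i. (\<lambda>m. norm (f i m) * \<rho> ^ tdeg m) summable_on UNIV"
    and Asupp: "\<forall>n. opB lam f n \<noteq> op_zero \<longrightarrow> n \<in> A"
    and Aadd: "\<forall>a\<in>A. \<forall>b\<in>A. a + b \<in> A"
    and r1: "r \<ge> 1"
  shows "Fsem lam f r = op_comp (op_lin lam) (word_sum lam f A (semr lam r))"
proof -
  have g: "good (opB lam f)" by (rule good_opB[OF f0 flin])
  have "Fsem lam f r = op_comp (op_lin lam) (Opg (opB lam f) (semr lam r))"
    using r1
  proof (induction r rule: dec_induct)
    case base
    have "Fsem lam f 1 = sem_step lam (comp_op f)" by (simp add: Fsem_def)
    also have "\<dots> = op_comp (op_lin lam) (Opg (opB lam f) (sem lam))"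
      by (subst base_F[OF f0 flin]) (rule step_sem[OF g])
    finally show ?case by (simp add: semr_def)
  next
    case (step n)
    have "Fsem lam f (Suc n) = sem_step lam (Fsem lam f n)" by (simp add: Fsem_def)
    also have "\<dots> = sem_step lam (op_comp (op_lin lam) (Opg (Bc (opB lam f) (semr lam n)) (\<lambda>a. mone a + mI a)))"
      using step.IH Opg_split[where S="semr lam n", OF g semr_Nil[of n lam, OF step.hyps(1)]] by simp
    also have "\<dots> = op_comp (op_lin lam) (Opg (Bc (opB lam f) (semr lam n)) (sem lam))"
      by (rule step_sem[OF good_Bc[OF g]])
    also have "\<dots> = op_comp (op_lin lam) (Opg (opB lam f) (semr lam (Suc n)))"
      by (simp add: Opg_comp[OF g] semr_Suc[OF step.hyps(1)])
    finally show ?case .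
  qed
  thus ?thesis by (simp add: word_sum_Opg[OF g Asupp])
qed

end
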